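(* Let $C_n>0$ and suppose $\lambda\ge\phi\,n^{1/3}/C_n^{1/3}$ for some constant $\phi>0$ not depending on $n$ or $C_n$. Then the predictions $x_t$ of FLH-OGD satisfy $$\sum_{t=1}^n(y_t-x_t)^2-(y_t-u_t)^2\le c\,(\log n)^p\max\{n^{1/3}C_n^{2/3},1\},$$ where $c>0$ depends only on $B,G,\phi$ and $p\ge0$ is an absolute constant (i.e. the regret is $\tilde O(n^{1/3}C_n^{2/3}\vee1)$).
   Context: Squared loss game: $n\ge 3$, $B\ge 1$, $G\ge B$; for $t=1,\dots,n$ the learner predicts $x_t\in[-B,B]$, then the adversary reveals $y_t\in[-G,G]$. $[a,b]=\{a,\dots,b\}$. FLH-OGD: For each $j\in[n]$ a base learner $E^j$ is started at time $j$; it runs projected online gradient descent on $[-B,B]$ on the losses $x\mapsto (y_t-x)^2$, $t\ge j$: its first prediction $x^{(j)}_j$ is a fixed point of $[-B,B]$, and $x^{(j)}_{t+1}=\Pi\big(x^{(j)}_t-\tfrac{1}{2\tau}\cdot 2(x^{(j)}_t-y_t)\big)$ with $\tau=t-j+1$, $\Pi$ the projection onto $[-B,B]$. The FLH meta-algorithm with learning rate $\zeta$ keeps a probability vector $v_t=(v_t^{(1)},\dots,v_t^{(t)})$, $v_1=(1)$; it predicts $x_t=\sum_{j\le t}v_t^{(j)}x^{(j)}_t$; after $y_t$ is revealed it sets $\hat v^{(i)}_{t+1}=v_t^{(i)}e^{-\zeta(y_t-x_t^{(i)})^2}/\sum_{j\le t}v_t^{(j)}e^{-\zeta(y_t-x_t^{(j)})^2}$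 for $i\le t$, then $v^{(t+1)}_{t+1}=1/(t+1)$ and $v^{(i)}_{t+1}=(1-\tfrac1{t+1})\hat v^{(i)}_{t+1}$. FLH-OGD uses $\zeta=1/(2(G+B)^2)$. Offline optimal: $u_1,\dots,u_n$ is an optimal solution of: minimize $\frac12\sum_{t=1}^n(y_t-\tilde u_t)^2$ subject to $\sum_{t=2}^{n}|\tilde u_t-\tilde u_{t-1}|\le C_n$ and $-B\le\tilde u_t\le B$; with optimal dual variables $\lambda\ge0$ (TV constraint) and $\gamma^\pm_t\ge0$ (box constraints) satisfying the KKT conditions: there are $s_t\in[-1,1]$ with $s_t=\mathrm{sign}(u_{t+1}-u_t)$ whenever $u_{t+1}\ne u_t$, $s_0=s_n=0$, $u_t-y_t=\lambda(s_t-s_{t-1})+\gamma_t^--\gamma_t^+$, and $\lambda(\sum_{t=2}^n|u_t-u_{t-1}|-C_n)=0$, $\gamma_t^-(u_t+B)=0$, $\gamma_t^+(u_t-B)=0$. *)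

theory Defs
  imports Complex_Main
begin

definition proj_box :: "real \<Rightarrow> real \<Rightarrow> real" where
  "proj_box B x = max (- B) (min B x)"

(* ogd_aux B x0 y j k = prediction of base learner E^j at time t = j + k
   (projected OGD on [-B,B], losses (y_t - x)^2, step 1/(2 tau), tau = t - j + 1) *)
fun ogd_aux :: "real \<Rightarrow> real \<Rightarrow> (nat \<Rightarrow> real) \<Rightarrow> nat \<Rightarrow> nat \<Rightarrow> real" where
  "ogd_aux B x0 y j 0 = x0"
| "ogd_aux B x0 y j (Suc k) =
     (let x = ogd_aux B x0 y j k; t = j + k; tau = real (k + 1)
      in proj_box B (x - (1 / (2 * tau)) * (2 * (x - y t))))"

definition ogd_pred :: "real \<Rightarrow> real \<Rightarrow> (nat \<Rightarrow> real) \<Rightarrow> nat \<Rightarrow> nat \<Rightarrow> real" where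
  "ogd_pred B x0 y j t = ogd_aux B x0 y j (t - j)"

fun flh_v :: "real \<Rightarrow> real \<Rightarrow> real \<Rightarrow> (nat \<Rightarrow> real) \<Rightarrow> nat \<Rightarrow> nat \<Rightarrow> real" where
  "flh_v B G x0 y 0 = (\<lambda>i. 0)"
| "flh_v B G x0 y (Suc 0) = (\<lambda>i. if i = 1 then 1 else 0)"
| "flh_v B G x0 y (Suc (Suc t)) =
     (let tt = Suc t; v = flh_v B G x0 y tt; zeta = 1 / (2 * (G + B)^2);
          L = (\<lambda>i. exp (- zeta * (y tt - ogd_pred B x0 y i tt)^2));
          Z = (\<Sum>j = 1..tt. v j * L j)
      in (\<lambda>i. if i = Suc tt then 1 / real (Suc tt)
               else if 1 \<le> i \<and> i \<le> tt then (1 - 1 / real (Suc tt)) * (v i * L i / Z)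
               else 0))"

definition flh_ogd_pred :: "real \<Rightarrow> real \<Rightarrow> real \<Rightarrow> (nat \<Rightarrow> real) \<Rightarrow> nat \<Rightarrow> real" where
  "flh_ogd_pred B G x0 y t = (\<Sum>j = 1..t. flh_v B G x0 y t j * ogd_pred B x0 y j t)"

definition tv_feasible :: "real \<Rightarrow> real \<Rightarrow> nat \<Rightarrow> (nat \<Rightarrow> real) \<Rightarrow> bool" where
  "tv_feasible B Cn n u \<longleftrightarrow>
     (\<Sum>t = 2..n. \<bar>u t - u (t - 1)\<bar>) \<le> Cn \<and> (\<forall>t \<in> {1..n}. - B \<le> u t \<and> u t \<le> B)"

definition offline_opt :: "real \<Rightarrow> real \<Rightarrow> nat \<Rightarrow> (nat \<Rightarrow> real) \<Rightarrow> (nat \<Rightarrow> real) \<Rightarrow> bool" where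
  "offline_opt B Cn n y u \<longleftrightarrow> tv_feasible B Cn n u \<and>
     (\<forall>u'. tv_feasible B Cn n u' \<longrightarrow>
        (1/2) * (\<Sum>t = 1..n. (y t - u t)^2) \<le> (1/2) * (\<Sum>t = 1..n. (y t - u' t)^2))"

(* KKT conditions for u with dual variables lam (TV) and gm, gp (box) *)
definition offline_kkt :: "real \<Rightarrow> real \<Rightarrow> nat \<Rightarrow> (nat \<Rightarrow> real) \<Rightarrow> (nat \<Rightarrow> real)
    \<Rightarrow> real \<Rightarrow> (nat \<Rightarrow> real) \<Rightarrow> (nat \<Rightarrow> real) \<Rightarrow> bool" where
  "offline_kkt B Cn n y u lam gm gp \<longleftrightarrow>
     lam \<ge> 0 \<and> (\<forall>t \<in> {1..n}. gm t \<ge> 0 \<and> gp t \<ge> 0) \<and>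
     (\<exists>s :: nat \<Rightarrow> real.
        (\<forall>t \<in> {0..n}. \<bar>s t\<bar> \<le> 1) \<and> s 0 = 0 \<and> s n = 0 \<and>
        (\<forall>t \<in> {1..<n}. u (t + 1) \<noteq> u t \<longrightarrow> s t = sgn (u (t + 1) - u t)) \<and>
        (\<forall>t \<in> {1..n}. u t - y t = lam * (s t - s (t - 1)) + gm t - gp t)) \<and>
     lam * ((\<Sum>t = 2..n. \<bar>u t - u (t - 1)\<bar>) - Cn) = 0 \<and>
     (\<forall>t \<in> {1..n}. gm t * (u t + B) = 0 \<and> gp t * (u t - B) = 0)"

end

theory Submission
  imports Defs "HOL-Analysis.Analysis"
begin

lemma proj_box_in: "0 \<le> B \<Longrightarrow> - B \<le> proj_box B x \<and> proj_box B x \<le> B"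
  unfolding proj_box_def by auto

lemma proj_box_nonexp: "- B \<le> w \<Longrightarrow> w \<le> B \<Longrightarrow> \<bar>proj_box B x - w\<bar> \<le> \<bar>x - w\<bar>"
  unfolding proj_box_def by (auto simp: max_def min_def abs_if)

lemma ogd_aux_in: "0 \<le> B \<Longrightarrow> - B \<le> x0 \<Longrightarrow> x0 \<le> B \<Longrightarrow>
   - B \<le> ogd_aux B x0 y j k \<and> ogd_aux B x0 y j k \<le> B"
  by (cases k) (auto simp: Let_def proj_box_in)

lemma ogd_pred_in: "0 \<le> B \<Longrightarrow> - B \<le> x0 \<Longrightarrow> x0 \<le> B \<Longrightarrow>
   - B \<le> ogd_pred B x0 y j t \<and> ogd_pred B x0 y j t \<le> B"
  unfolding ogd_pred_def by (rule ogd_aux_in)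

lemma ogd_step:
  fixes x yv w tau B :: real
  assumes "tau > 0" "- B \<le> w" "w \<le> B"
  shows "(yv - x)^2 - (yv - w)^2 \<le> (tau - 1) * (x - w)^2
     - tau * (proj_box B (x - (1 / (2 * tau)) * (2 * (x - yv))) - w)^2 + (x - yv)^2 / tau"
proof -
  define z where "z = x - (1 / (2 * tau)) * (2 * (x - yv))"
  have "\<bar>proj_box B z - w\<bar> \<le> \<bar>z - w\<bar>" using proj_box_nonexp assms by blast
  then have "(proj_box B z - w)^2 \<le> (z - w)^2"
    by (metis abs_ge_zero power2_abs power_mono)
  then have 1: "tau * (proj_box B z - w)^2 \<le> tau * (z - w)^2"
    using assms(1) by (simp add: mult_left_mono)
  have 2: "tau * (z - w)^2 = tau * (x - w)^2 - 2 * (x - w) * (x - yv) + (x - yv)^2 / tau"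
    unfolding z_def using assms(1) by (simp add: field_simps power2_eq_square)
  have 3: "(yv - x)^2 - (yv - w)^2 = 2 * (x - yv) * (x - w) - (x - w)^2"
    by (simp add: power2_eq_square algebra_simps)
  show ?thesis using 1 2 3 unfolding z_def[symmetric] by (simp add: algebra_simps)
qed

lemma harm_bound: "1 \<le> m \<Longrightarrow> (\<Sum>k<m. 1 / (real k + 1)) \<le> 1 + ln (real m)"
proof (induction m rule: nat_induct_at_least)
  case base
  then show ?case by simp
next
  case (Suc m)
  have "ln (real m / (real m + 1)) \<le> real m / (real m + 1) - 1"
    using Suc.hyps by (intro ln_le_minus_one) auto
  also have "\<dots> = - 1 / (real m + 1)" by (simp add: field_simps)
  finally have "ln (real m / (real m + 1)) \<le> - 1 / (real m + 1)" .
  moreover have "ln (real m / (real m + 1)) = ln (real m) - ln (real m + 1)"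
    using Suc.hyps by (simp add: ln_div)
  ultimately have "1 / (real m + 1) \<le> ln (real m + 1) - ln (real m)" by simp
  then show ?case using Suc.IH by (simp add: add.commute)
qed


lemma ogd_sum:
  assumes B: "0 \<le> B" "- B \<le> x0" "x0 \<le> B" and w: "- B \<le> w" "w \<le> B"
  shows "(\<Sum>k<m. (y (j + k) - ogd_aux B x0 y j k)^2 - (y (j + k) - w)^2)
     \<le> - real m * (ogd_aux B x0 y j m - w)^2
        + (\<Sum>k<m. (ogd_aux B x0 y j k - y (j + k))^2 / (real k + 1))"
proof (induction m)
  case 0
  then show ?case by simp
next
  case (Suc m)
  let ?x = "ogd_aux B x0 y j m"
  have st: "(y (j + m) - ?x)^2 - (y (j + m) - w)^2 \<le> (real (m + 1) - 1) * (?x - w)^2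
     - real (m + 1) * (proj_box B (?x - (1 / (2 * real (m + 1))) * (2 * (?x - y (j + m)))) - w)^2
     + (?x - y (j + m))^2 / real (m + 1)"
    by (rule ogd_step) (use w in auto)
  have e: "ogd_aux B x0 y j (Suc m) = proj_box B (?x - (1 / (2 * real (m + 1))) * (2 * (?x - y (j + m))))"
    by (simp add: Let_def)
  show ?case using Suc.IH st unfolding e by (simp add: algebra_simps)
qed

lemma ogd_regret:
  assumes B: "0 \<le> B" "- B \<le> x0" "x0 \<le> B" and w: "- B \<le> w" "w \<le> B"
    and jb: "j \<le> s" and yb: "\<forall>t\<in>{j..s}. \<bar>y t\<bar> \<le> G"
  shows "(\<Sum>t=j..s. (y t - ogd_pred B x0 y j t)^2 - (y t - w)^2)
     \<le> (G + B)^2 * (1 + ln (real (s - j + 1)))"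
proof -
  define m where "m = s - j + 1"
  have m1: "1 \<le> m" unfolding m_def by simp
  have re: "(\<Sum>t=j..s. (y t - ogd_pred B x0 y j t)^2 - (y t - w)^2)
     = (\<Sum>k<m. (y (j + k) - ogd_aux B x0 y j k)^2 - (y (j + k) - w)^2)"
  proof -
    have "{j..s} = {0 + j..(s - j) + j}" using jb by simp
    then have "(\<Sum>t=j..s. (y t - ogd_pred B x0 y j t)^2 - (y t - w)^2)
       = (\<Sum>k=0..s-j. (y (k + j) - ogd_pred B x0 y j (k + j))^2 - (y (k + j) - w)^2)"
      by (simp only: sum.shift_bounds_cl_nat_ivl)
    also have "{0..s-j} = {..<m}" unfolding m_def by auto
    finally show ?thesis by (simp add: ogd_pred_def add.commute)
  qed
  have bd: "\<And>k. k < m \<Longrightarrow> (ogd_aux B x0 y j k - y (j + k))^2 / (real k + 1) \<le> (G + B)^2 / (real k + 1)"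
  proof -
    fix k assume "k < m"
    then have "\<bar>y (j + k)\<bar> \<le> G" using yb unfolding m_def using jb by auto
    moreover have "- B \<le> ogd_aux B x0 y j k \<and> ogd_aux B x0 y j k \<le> B" using ogd_aux_in B by blast
    ultimately have "\<bar>ogd_aux B x0 y j k - y (j + k)\<bar> \<le> G + B" by auto
    then have "(ogd_aux B x0 y j k - y (j + k))^2 \<le> (G + B)^2"
      by (metis abs_ge_zero power2_abs power_mono)
    then show "(ogd_aux B x0 y j k - y (j + k))^2 / (real k + 1) \<le> (G + B)^2 / (real k + 1)"
      by (simp add: divide_right_mono)
  qed
  have "(\<Sum>k<m. (y (j + k) - ogd_aux B x0 y j k)^2 - (y (j + k) - w)^2)
     \<le> - real m * (ogd_aux B x0 y j m - w)^2
        + (\<Sum>k<m. (ogd_aux B x0 y j k - y (j + k))^2 / (real k + 1))"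
    by (rule ogd_sum[OF B w])
  also have "\<dots> \<le> (\<Sum>k<m. (ogd_aux B x0 y j k - y (j + k))^2 / (real k + 1))"
    by simp
  also have "\<dots> \<le> (\<Sum>k<m. (G + B)^2 / (real k + 1))"
    by (rule sum_mono) (use bd in auto)
  also have "\<dots> = (G + B)^2 * (\<Sum>k<m. 1 / (real k + 1))"
    by (simp add: sum_distrib_left)
  also have "\<dots> \<le> (G + B)^2 * (1 + ln (real m))"
    by (rule mult_left_mono) (use harm_bound[OF m1] in auto)
  finally show ?thesis using re unfolding m_def by simp
qed

lemma flh_w:
  "(\<forall>i\<in>{1..Suc t}. 0 < flh_v B G x0 y (Suc t) i) \<and> (\<Sum>i=1..Suc t. flh_v B G x0 y (Suc t) i) = 1"
proof (induction t)
  case 0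
  then show ?case by simp
next
  case (Suc t)
  define v where "v = flh_v B G x0 y (Suc t)"
  define L where "L = (\<lambda>i. exp (- (1 / (2 * (G + B)^2)) * (y (Suc t) - ogd_pred B x0 y i (Suc t))^2))"
  define Z where "Z = (\<Sum>j = 1..Suc t. v j * L j)"
  have vp: "\<forall>i\<in>{1..Suc t}. 0 < v i" and vs: "(\<Sum>i=1..Suc t. v i) = 1" using Suc.IH unfolding v_def by auto
  have Lp: "\<And>i. 0 < L i" unfolding L_def by simp
  have Zp: "0 < Z" unfolding Z_def
    by (rule sum_pos) (use vp Lp in auto)
  have eq: "flh_v B G x0 y (Suc (Suc t)) = (\<lambda>i. if i = Suc (Suc t) then 1 / real (Suc (Suc t))
               else if 1 \<le> i \<and> i \<le> Suc t then (1 - 1 / real (Suc (Suc t))) * (v i * L i / Z)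
               else 0)"
    unfolding v_def L_def Z_def flh_v.simps Let_def by (rule refl)
  have pos: "\<forall>i\<in>{1..Suc (Suc t)}. 0 < flh_v B G x0 y (Suc (Suc t)) i"
  proof
    fix i assume i: "i \<in> {1..Suc (Suc t)}"
    show "0 < flh_v B G x0 y (Suc (Suc t)) i"
    proof (cases "i = Suc (Suc t)")
      case True then show ?thesis unfolding eq by simp
    next
      case False
      then have "i \<in> {1..Suc t}" using i by auto
      then have "0 < v i" using vp by auto
      moreover have "0 < 1 - 1 / real (Suc (Suc t))" by (simp add: field_simps)
      ultimately have "0 < (1 - 1 / real (Suc (Suc t))) * (v i * L i / Z)"
        using Lp[of i] Zp by (intro mult_pos_pos divide_pos_pos) auto
      then show ?thesis unfolding eq using False i by auto
    qed
  qed
  have "(\<Sum>i=1..Suc (Suc t). flh_v B G x0 y (Suc (Suc t)) i)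
      = (\<Sum>i=1..Suc t. (1 - 1 / real (Suc (Suc t))) * (v i * L i / Z)) + 1 / real (Suc (Suc t))"
  proof -
    have "(\<Sum>i=1..Suc (Suc t). flh_v B G x0 y (Suc (Suc t)) i)
        = (\<Sum>i=1..Suc t. flh_v B G x0 y (Suc (Suc t)) i) + flh_v B G x0 y (Suc (Suc t)) (Suc (Suc t))"
      by (simp add: sum.cl_ivl_Suc)
    moreover have "(\<Sum>i=1..Suc t. flh_v B G x0 y (Suc (Suc t)) i)
       = (\<Sum>i=1..Suc t. (1 - 1 / real (Suc (Suc t))) * (v i * L i / Z))"
      by (rule sum.cong) (auto simp del: flh_v.simps simp: eq)
    ultimately show ?thesis by (simp del: flh_v.simps add: eq)
  qed
  also have "(\<Sum>i=1..Suc t. (1 - 1 / real (Suc (Suc t))) * (v i * L i / Z))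
      = (1 - 1 / real (Suc (Suc t))) * ((\<Sum>i=1..Suc t. v i * L i) / Z)"
    by (simp only: sum_distrib_left[symmetric] sum_divide_distrib[symmetric])
  also have "\<dots> = 1 - 1 / real (Suc (Suc t))" using Zp unfolding Z_def by simp
  finally show ?case using pos by simp
qed

lemma flh_w_pos: "1 \<le> i \<Longrightarrow> i \<le> t \<Longrightarrow> 0 < flh_v B G x0 y t i"
  using flh_w[of "t - 1" B G x0 y] by auto

lemma flh_w_sum: "1 \<le> t \<Longrightarrow> (\<Sum>i=1..t. flh_v B G x0 y t i) = 1"
  using flh_w[of "t - 1" B G x0 y] by auto

lemma flh_pred_in: assumes "0 \<le> B" "- B \<le> x0" "x0 \<le> B" "1 \<le> t"
  shows "- B \<le> flh_ogd_pred B G x0 y t \<and> flh_ogd_pred B G x0 y t \<le> B"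
proof -
  have "(\<Sum>j = 1..t. flh_v B G x0 y t j *\<^sub>R ogd_pred B x0 y j t) \<in> {-B..B}"
    by (rule convex_sum) (use flh_w_sum[OF assms(4)] flh_w_pos ogd_pred_in[OF assms(1-3)] in
        \<open>auto simp: less_imp_le\<close>)
  then show ?thesis unfolding flh_ogd_pred_def by simp
qed


lemma expconc:
  fixes a x :: "nat \<Rightarrow> real"
  assumes S: "finite S" "S \<noteq> {}" and a: "sum a S = 1" "\<forall>i\<in>S. 0 \<le> a i"
    and xb: "\<forall>i\<in>S. - B \<le> x i \<and> x i \<le> B" and yb: "\<bar>yv\<bar> \<le> G" and GB: "0 < G + B"
  shows "(\<Sum>i\<in>S. a i * exp (- (1 / (2 * (G + B)^2)) * (yv - x i)^2))
     \<le> exp (- (1 / (2 * (G + B)^2)) * (yv - (\<Sum>i\<in>S. a i * x i))^2)"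
proof -
  define z where "z = 1 / (2 * (G + B)^2)"
  have zp: "0 < z" unfolding z_def using GB by simp
  have zGB: "z * (G + B)^2 = 1 / 2" unfolding z_def using GB by simp
  define f where "f = (\<lambda>x::real. - exp (- z * (yv - x)^2))"
  define f' where "f' = (\<lambda>x::real. - exp (- z * (yv - x)^2) * (2 * z * (yv - x)))"
  define f'' where "f'' = (\<lambda>x::real. exp (- z * (yv - x)^2) * (2 * z - (2 * z * (yv - x))^2))"
  have d1: "\<And>x. DERIV f x :> f' x"
    unfolding f_def f'_def
    by (auto intro!: derivative_eq_intros simp: algebra_simps power2_eq_square)
  have d2: "\<And>x. DERIV f' x :> f'' x"
    unfolding f'_def f''_def
    by (auto intro!: derivative_eq_intros simp: algebra_simps power2_eq_square)
  have pos: "\<And>x. x \<in> {-B..B} \<Longrightarrow> 0 \<le> f'' x"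
  proof -
    fix x assume x: "x \<in> {-B..B}"
    then have "\<bar>yv - x\<bar> \<le> G + B" using yb by auto
    then have "(yv - x)^2 \<le> (G + B)^2" by (metis abs_ge_zero power2_abs power_mono)
    then have "z * (yv - x)^2 \<le> z * (G + B)^2" using zp by (simp add: mult_left_mono)
    then have "2 * z * (z * (yv - x)^2) \<le> 2 * z * (1/2)" using zGB zp by (simp add: mult_left_mono)
    then have "(2 * z * (yv - x))^2 \<le> 2 * z" by (simp add: power2_eq_square algebra_simps)
    then show "0 \<le> f'' x" unfolding f''_def by simp
  qed
  have cv: "convex_on {-B..B} f"
    by (rule f''_ge0_imp_convex[OF convex_real_interval(5) d1 d2 pos])
  have "f (\<Sum>i\<in>S. a i *\<^sub>R x i) \<le> (\<Sum>i\<in>S. a i * f (x i))"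
    by (rule convex_on_sum[OF S cv a(1)]) (use a xb in auto)
  then have "- exp (- z * (yv - (\<Sum>i\<in>S. a i * x i))^2) \<le> - (\<Sum>i\<in>S. a i * exp (- z * (yv - x i)^2))"
    unfolding f_def by (simp add: sum_negf)
  then show ?thesis unfolding z_def by simp
qed

lemma flh_mult:
  assumes "1 \<le> r" "r \<le> Suc s" "s \<le> n" and yb: "\<forall>t\<in>{1..n}. \<bar>y t\<bar> \<le> G"
    and B: "0 \<le> B" "- B \<le> x0" "x0 \<le> B" and GB: "0 < G + B"
  shows "exp ((1 / (2 * (G + B)^2)) * (\<Sum>t=r..s. (y t - flh_ogd_pred B G x0 y t)^2 - (y t - ogd_pred B x0 y r t)^2)) / real (Suc s)
     \<le> flh_v B G x0 y (Suc s) r"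
  using assms(2,3)
proof (induction s)
  case 0
  then have "r = 1" using assms(1) by simp
  then show ?case by simp
next
  case (Suc s)
  define z where "z = 1 / (2 * (G + B)^2)"
  define ll where "ll = (\<lambda>t. (y t - flh_ogd_pred B G x0 y t)^2 - (y t - ogd_pred B x0 y r t)^2)"
  show ?case
  proof (cases "r = Suc (Suc s)")
    case True
    then show ?thesis by (simp add: Let_def)
  next
    case False
    then have r: "r \<le> Suc s" using Suc.prems by simp
    have IH: "exp (z * sum ll {r..s}) / real (Suc s) \<le> flh_v B G x0 y (Suc s) r"
      using Suc.IH r Suc.prems unfolding z_def ll_def by simp
    define v where "v = flh_v B G x0 y (Suc s)"
    define L where "L = (\<lambda>i. exp (- z * (y (Suc s) - ogd_pred B x0 y i (Suc s))^2))"
    define Z where "Z = (\<Sum>j = 1..Suc s. v j * L j)"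
    have vp: "\<And>i. 1 \<le> i \<Longrightarrow> i \<le> Suc s \<Longrightarrow> 0 < v i" unfolding v_def by (rule flh_w_pos)
    have Lp: "\<And>i. 0 < L i" unfolding L_def by simp
    have Zp: "0 < Z" unfolding Z_def
      by (rule sum_pos) (use vp Lp in auto)
    have eq: "flh_v B G x0 y (Suc (Suc s)) r = (1 - 1 / real (Suc (Suc s))) * (v r * L r / Z)"
      using r assms(1) unfolding v_def L_def Z_def z_def flh_v.simps Let_def by simp
    define X where "X = flh_ogd_pred B G x0 y (Suc s)"
    have Xd: "X = (\<Sum>j = 1..Suc s. v j * ogd_pred B x0 y j (Suc s))"
      unfolding X_def v_def flh_ogd_pred_def by simp
    have ZX: "Z \<le> exp (- z * (y (Suc s) - X)^2)"
      unfolding Z_def L_def Xd z_def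
      by (rule expconc) (use flh_w_sum[of "Suc s"] vp ogd_pred_in[OF B] yb Suc.prems GB in
          \<open>auto simp: v_def less_imp_le\<close>)
    have "v r * L r / exp (- z * (y (Suc s) - X)^2) \<le> v r * L r / Z"
      using ZX Zp vp[OF assms(1) r] Lp[of r] by (intro divide_left_mono) auto
    moreover have "v r * L r / exp (- z * (y (Suc s) - X)^2) = v r * exp (z * ll (Suc s))"
      unfolding L_def ll_def X_def by (simp add: exp_diff[symmetric] exp_minus field_simps exp_add[symmetric])
    ultimately have A: "v r * exp (z * ll (Suc s)) \<le> v r * L r / Z" by simp
    have sumeq: "sum ll {r..Suc s} = sum ll {r..s} + ll (Suc s)"
      using r by (simp add: sum.cl_ivl_Suc)
    have "exp (z * sum ll {r..Suc s}) / real (Suc (Suc s))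
        = (real (Suc s) / real (Suc (Suc s))) * (exp (z * sum ll {r..s}) / real (Suc s)) * exp (z * ll (Suc s))"
    proof -
      have "(real (Suc s) / real (Suc (Suc s))) * (exp (z * sum ll {r..s}) / real (Suc s))
          = exp (z * sum ll {r..s}) / real (Suc (Suc s))"
        by (metis (no_types) of_nat_0_less_iff zero_less_Suc times_divide_times_eq
             divide_divide_eq_left' mult.commute nonzero_mult_div_cancel_left order_less_irrefl)
      then show ?thesis unfolding sumeq by (simp add: distrib_left exp_add)
    qed
    also have "\<dots> \<le> (real (Suc s) / real (Suc (Suc s))) * v r * exp (z * ll (Suc s))"
      using IH unfolding v_def by (intro mult_right_mono mult_left_mono) auto
    also have "\<dots> \<le> (real (Suc s) / real (Suc (Suc s))) * (v r * L r / Z)"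
    proof -
      have "(real (Suc s) / real (Suc (Suc s))) * (v r * exp (z * ll (Suc s)))
         \<le> (real (Suc s) / real (Suc (Suc s))) * (v r * L r / Z)"
        by (rule mult_left_mono[OF A]) simp
      then show ?thesis by (simp only: mult.assoc)
    qed
    also have "\<dots> = flh_v B G x0 y (Suc (Suc s)) r"
      unfolding eq by (simp add: field_simps)
    finally show ?thesis unfolding z_def ll_def by simp
  qed
qed

lemma flh_regret:
  assumes "1 \<le> r" "r \<le> s" "s \<le> n" and yb: "\<forall>t\<in>{1..n}. \<bar>y t\<bar> \<le> G"
    and B: "0 \<le> B" "- B \<le> x0" "x0 \<le> B" and GB: "0 < G + B"
  shows "(\<Sum>t=r..s. (y t - flh_ogd_pred B G x0 y t)^2 - (y t - ogd_pred B x0 y r t)^2)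
     \<le> 2 * (G + B)^2 * ln (real s + 1)"
proof -
  define z where "z = 1 / (2 * (G + B)^2)"
  define S where "S = (\<Sum>t=r..s. (y t - flh_ogd_pred B G x0 y t)^2 - (y t - ogd_pred B x0 y r t)^2)"
  have "exp (z * S) / real (Suc s) \<le> flh_v B G x0 y (Suc s) r"
    unfolding z_def S_def by (rule flh_mult) (use assms in auto)
  also have "\<dots> \<le> (\<Sum>i=1..Suc s. flh_v B G x0 y (Suc s) i)"
    by (rule member_le_sum) (use assms flh_w_pos in \<open>auto simp: less_imp_le\<close>)
  also have "\<dots> = 1" by (rule flh_w_sum) simp
  finally have "exp (z * S) \<le> real s + 1" by (simp add: field_simps)
  then have "z * S \<le> ln (real s + 1)"
    by (metis exp_gt_zero exp_le_cancel_iff exp_ln less_le_trans)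
  moreover have "z * S * (2 * (G + B)^2) = S" unfolding z_def using GB by simp
  moreover have "0 \<le> 2 * (G + B)^2" by simp
  ultimately have "S \<le> ln (real s + 1) * (2 * (G + B)^2)"
    by (metis mult_right_mono)
  then show ?thesis unfolding S_def by (simp add: algebra_simps)
qed


lemma ln_n_ge1: "3 \<le> n \<Longrightarrow> 1 \<le> ln (real n)"
proof -
  assume "3 \<le> n"
  then have "ln 3 \<le> ln (real n)" by simp
  then show ?thesis using ln3_gt_1 by simp
qed

lemma interval_bound:
  assumes ab: "1 \<le> a" "a \<le> b" "b \<le> n" and n3: "3 \<le> n" and yb: "\<forall>t\<in>{1..n}. \<bar>y t\<bar> \<le> G"
    and B: "1 \<le> B" "G \<ge> B" "- B \<le> x0" "x0 \<le> B" and w: "- B \<le> w" "w \<le> B"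
  shows "(\<Sum>t=a..b. (y t - flh_ogd_pred B G x0 y t)^2) \<le> (\<Sum>t=a..b. (y t - w)^2) + 6 * (G + B)^2 * ln (real n)"
proof -
  have GB: "0 < G + B" using B by simp
  have 1: "(\<Sum>t=a..b. (y t - flh_ogd_pred B G x0 y t)^2 - (y t - ogd_pred B x0 y a t)^2)
     \<le> 2 * (G + B)^2 * ln (real b + 1)"
    by (rule flh_regret) (use ab yb B GB in auto)
  have 2: "(\<Sum>t=a..b. (y t - ogd_pred B x0 y a t)^2 - (y t - w)^2)
     \<le> (G + B)^2 * (1 + ln (real (b - a + 1)))"
    by (rule ogd_regret) (use ab yb B w in auto)
  have l1: "1 \<le> ln (real n)" by (rule ln_n_ge1[OF n3])
  have "ln (real b + 1) \<le> ln (2 * real n)" using ab by simp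
  also have "\<dots> = ln 2 + ln (real n)" using n3 by (simp add: ln_mult)
  also have "ln 2 \<le> ln (real n)" using n3 by simp
  finally have l2: "ln (real b + 1) \<le> 2 * ln (real n)" by simp
  have l3: "ln (real (b - a + 1)) \<le> ln (real n)" using ab by simp
  have sq: "0 \<le> (G + B)^2" by simp
  have "(\<Sum>t=a..b. (y t - flh_ogd_pred B G x0 y t)^2) - (\<Sum>t=a..b. (y t - w)^2)
     = (\<Sum>t=a..b. (y t - flh_ogd_pred B G x0 y t)^2 - (y t - ogd_pred B x0 y a t)^2)
       + (\<Sum>t=a..b. (y t - ogd_pred B x0 y a t)^2 - (y t - w)^2)"
    by (simp add: sum_subtractf)
  also have "\<dots> \<le> 2 * (G + B)^2 * ln (real b + 1) + (G + B)^2 * (1 + ln (real (b - a + 1)))"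
    using 1 2 by simp
  also have "\<dots> \<le> 2 * (G + B)^2 * (2 * ln (real n)) + (G + B)^2 * (ln (real n) + ln (real n))"
    using l1 l2 l3 sq by (intro add_mono mult_left_mono) auto
  finally show ?thesis by (simp add: algebra_simps)
qed

lemma trivial_regret:
  assumes yb: "\<forall>t\<in>{1..n}. \<bar>y t\<bar> \<le> G" and B: "1 \<le> B" "- B \<le> x0" "x0 \<le> B"
  shows "(\<Sum>t=1..n. (y t - flh_ogd_pred B G x0 y t)^2 - (y t - u t)^2) \<le> real n * (G + B)^2"
proof -
  have "(\<Sum>t=1..n. (y t - flh_ogd_pred B G x0 y t)^2 - (y t - u t)^2) \<le> (\<Sum>t=1..n. (G + B)^2)"
  proof (rule sum_mono)
    fix t assume t: "t \<in> {1..n}"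
    have "- B \<le> flh_ogd_pred B G x0 y t \<and> flh_ogd_pred B G x0 y t \<le> B"
      by (rule flh_pred_in) (use B t in auto)
    moreover have "\<bar>y t\<bar> \<le> G" using yb t by auto
    ultimately have "\<bar>y t - flh_ogd_pred B G x0 y t\<bar> \<le> G + B" by (simp add: abs_le_iff)
    then have "(y t - flh_ogd_pred B G x0 y t)^2 \<le> (G + B)^2" by (metis abs_ge_zero power2_abs power_mono)
    moreover have "0 \<le> (y t - u t)^2" by simp
    ultimately show "(y t - flh_ogd_pred B G x0 y t)^2 - (y t - u t)^2 \<le> (G + B)^2" by linarith
  qed
  then show ?thesis by simp
qed


lemma sum_split_ivl:
  fixes f :: "nat \<Rightarrow> real"
  assumes "a \<le> Suc b" "b \<le> c"
  shows "sum f {a..c} = sum f {a..b} + sum f {Suc b..c}"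
proof -
  have "{a..c} = {a..b} \<union> {Suc b..c}" using assms by auto
  moreover have "{a..b} \<inter> {Suc b..c} = {}" by auto
  ultimately show ?thesis by (simp add: sum.union_disjoint)
qed

locale offl =
  fixes n :: nat and B lam R l0 V0 :: real and y u X s gm gp :: "nat \<Rightarrow> real"
  assumes Bpos: "0 < B"
    and ubox: "\<forall>t\<in>{1..n}. - B \<le> u t \<and> u t \<le> B"
    and sgnc: "\<forall>t\<in>{1..<n}. u (t + 1) \<noteq> u t \<longrightarrow> s t = sgn (u (t + 1) - u t)"
    and eqn: "\<forall>t\<in>{1..n}. u t - y t = lam * (s t - s (t - 1)) + gm t - gp t"
    and slack: "\<forall>t\<in>{1..n}. gm t * (u t + B) = 0 \<and> gp t * (u t - B) = 0"
    and INT: "\<And>a b w. 1 \<le> a \<Longrightarrow> a \<le> b \<Longrightarrow> b \<le> n \<Longrightarrow> - B \<le> w \<Longrightarrow> w \<le> B \<Longrightarrow>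
        (\<Sum>t=a..b. (y t - X t)^2) \<le> (\<Sum>t=a..b. (y t - w)^2) + R"
    and Rnn: "0 \<le> R" and lampos: "0 < lam"
    and l0pos: "0 < l0" and V0pos: "0 < V0" and lV: "l0 * V0^2 \<le> 1"
    and lk: "l0 * ((4 * R + 4) / (2 * lam))^2 \<le> 4 * R + 4"
    and kB: "(4 * R + 4) / (2 * lam) \<le> B / 2"
    and cpex: "\<exists>m. 1 \<le> m \<and> m < n \<and> u (Suc m) \<noteq> u m"
begin

definition "Kg = 4 * R + 4"
definition "P0 = 2 * R + 2"
definition "kap = Kg / (2 * lam)"
definition "tv i j = (\<Sum>t\<in>{i<..j}. \<bar>u t - u (t - 1)\<bar>)"
definition "cp m \<longleftrightarrow> 1 \<le> m \<and> m < n \<and> u (Suc m) \<noteq> u m"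
definition "reg t = (y t - X t)^2 - (y t - u t)^2"
definition "Phi a p k = (Kg / l0) * real (a - 1) + (Kg / V0) * tv 1 a + (P0 / B) * tv 1 p
   + (if k = (0::nat) then 0 else P0) + R"

lemma kap_pos: "0 < kap" unfolding kap_def Kg_def using Rnn lampos by simp

lemma tv_nonneg: "0 \<le> tv i j" unfolding tv_def by (simp add: sum_nonneg)

lemma tv_split: "i \<le> j \<Longrightarrow> j \<le> k \<Longrightarrow> tv i k = tv i j + tv j k"
proof -
  assume a: "i \<le> j" "j \<le> k"
  have "{i<..k} = {i<..j} \<union> {j<..k}" using a by auto
  moreover have "{i<..j} \<inter> {j<..k} = {}" by auto
  ultimately show ?thesis unfolding tv_def by (simp add: sum.union_disjoint)
qed

lemma tv_mono: "i \<le> j \<Longrightarrow> j \<le> k \<Longrightarrow> tv i j \<le> tv i k"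
  using tv_split[of i j k] tv_nonneg[of j k] by simp

lemma tv_mono2: "i \<le> j \<Longrightarrow> j \<le> k \<Longrightarrow> tv j k \<le> tv i k"
  using tv_split[of i j k] tv_nonneg[of i j] by simp

lemma tv_Suc: "i \<le> j \<Longrightarrow> tv i (Suc j) = tv i j + \<bar>u (Suc j) - u j\<bar>"
proof -
  assume "i \<le> j"
  then have "{i<..Suc j} = insert (Suc j) {i<..j}" by auto
  then show ?thesis unfolding tv_def by simp
qed

lemma tv_empty: "j \<le> i \<Longrightarrow> tv i j = 0"
  unfolding tv_def by simp

lemma tv_ge: "i \<le> j \<Longrightarrow> \<bar>u j - u i\<bar> \<le> tv i j"
proof (induction j rule: dec_induct)
  case base
  then show ?case by (simp add: tv_empty)
next
  case (step j)
  then show ?case using tv_Suc[of i j] by simp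
qed

lemma const_between:
  assumes jm: "j \<le> m" and mn: "m \<le> n" and j1: "1 \<le> j" and nc: "\<And>t. j \<le> t \<Longrightarrow> t < m \<Longrightarrow> \<not> cp t"
  shows "u j = u m"
proof -
  have "\<forall>q. j \<le> q \<longrightarrow> q \<le> m \<longrightarrow> u j = u q"
  proof
    fix q
    show "j \<le> q \<longrightarrow> q \<le> m \<longrightarrow> u j = u q"
    proof (induction q)
      case 0
      then show ?case by simp
    next
      case (Suc q)
      show ?case
      proof (intro impI)
        assume a: "j \<le> Suc q" "Suc q \<le> m"
        show "u j = u (Suc q)"
        proof (cases "j = Suc q")
          case True then show ?thesis by simp
        next
          case False
          then have jq: "j \<le> q" using a by simp
          then have "u j = u q" using Suc.IH a by simp
          moreover have "\<not> cp q" using nc jq a by simp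
          then have "u (Suc q) = u q" using jq j1 a mn unfolding cp_def by auto
          ultimately show ?thesis by simp
        qed
      qed
    qed
  qed
  then show ?thesis using jm by simp
qed

lemma tv_const:
  assumes "\<forall>t\<in>{j..k}. u t = u k"
  shows "tv j k = 0"
  unfolding tv_def
proof (rule sum.neutral, rule ballI)
  fix t assume t: "t \<in> {j<..k}"
  then have "t \<in> {j..k}" "t - 1 \<in> {j..k}" by auto
  then have "u t = u k" "u (t - 1) = u k" using assms by (metis (no_types))+
  then show "\<bar>u t - u (t - 1)\<bar> = 0" by simp
qed

lemma bin_cost:
  assumes "1 \<le> a" "a \<le> Suc b" "b \<le> n" "- B \<le> w" "w \<le> B"
  shows "(\<Sum>t=a..b. reg t) \<le> R + (\<Sum>t=a..b. (y t - w)^2 - (y t - u t)^2)"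
proof (cases "a \<le> b")
  case True
  have "(\<Sum>t=a..b. (y t - X t)^2) \<le> (\<Sum>t=a..b. (y t - w)^2) + R"
    by (rule INT) (use assms True in auto)
  then show ?thesis unfolding reg_def by (simp add: sum_subtractf)
next
  case False
  then show ?thesis using Rnn by simp
qed

lemma const_cost:
  assumes "1 \<le> a" "a \<le> Suc b" "b \<le> n" "\<forall>t\<in>{a..b}. u t = v" "- B \<le> v" "v \<le> B"
  shows "(\<Sum>t=a..b. reg t) \<le> R"
proof -
  have "(\<Sum>t=a..b. reg t) \<le> R + (\<Sum>t=a..b. (y t - v)^2 - (y t - u t)^2)"
    by (rule bin_cost) (use assms in auto)
  also have "(\<Sum>t=a..b. (y t - v)^2 - (y t - u t)^2) = 0"
    by (rule sum.neutral) (use assms in auto)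
  finally show ?thesis by simp
qed

lemma open_cost:
  assumes "1 \<le> a" "a \<le> Suc b" "b \<le> n"
    and z1: "(\<Sum>t=a..b. y t - u t) = 0" and z2: "(\<Sum>t=a..b. u t * (y t - u t)) = 0"
    and len: "real (Suc b - a) < l0" and var: "tv a b < V0"
  shows "(\<Sum>t=a..b. reg t) \<le> R + 1"
proof (cases "a \<le> b")
  case False
  then show ?thesis using Rnn by simp
next
  case True
  have ua: "- B \<le> u a" "u a \<le> B" using ubox assms True by auto
  have "(\<Sum>t=a..b. reg t) \<le> R + (\<Sum>t=a..b. (y t - u a)^2 - (y t - u t)^2)"
    by (rule bin_cost) (use assms ua in auto)
  also have "(\<Sum>t=a..b. (y t - u a)^2 - (y t - u t)^2)
      = (\<Sum>t=a..b. (u t - u a)^2) + 2 * ((\<Sum>t=a..b. u t * (y t - u t)) - u a * (\<Sum>t=a..b. y t - u t))"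
  proof -
    have "(\<Sum>t=a..b. (y t - u a)^2 - (y t - u t)^2)
        = (\<Sum>t=a..b. (u t - u a)^2 + 2 * (u t * (y t - u t) - u a * (y t - u t)))"
      by (rule sum.cong) (simp_all add: power2_eq_square algebra_simps)
    also have "\<dots> = (\<Sum>t=a..b. (u t - u a)^2) + 2 * ((\<Sum>t=a..b. u t * (y t - u t)) - u a * (\<Sum>t=a..b. y t - u t))"
      by (simp only: sum.distrib sum_distrib_left[symmetric] sum_subtractf)
    finally show ?thesis .
  qed
  also have "\<dots> = (\<Sum>t=a..b. (u t - u a)^2)" using z1 z2 by simp
  also have "\<dots> \<le> (\<Sum>t=a..b. (tv a b)^2)"
  proof (rule sum_mono)
    fix t assume t: "t \<in> {a..b}"
    have "\<bar>u t - u a\<bar> \<le> tv a t" using t by (intro tv_ge) auto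
    also have "\<dots> \<le> tv a b" using t by (intro tv_mono) auto
    finally show "(u t - u a)^2 \<le> (tv a b)^2" by (metis abs_ge_zero power2_abs power_mono)
  qed
  also have "\<dots> = real (Suc b - a) * (tv a b)^2" by simp
  also have "\<dots> \<le> l0 * V0^2"
    using len var tv_nonneg[of a b] by (intro mult_mono power_mono) auto
  finally show ?thesis using lV by simp
qed

lemma tele: "m0 \<le> m \<Longrightarrow> (\<Sum>t=Suc m0..m. s t - s (t - 1)) = s m - s m0"
proof (induction m rule: dec_induct)
  case base
  then show ?case by simp
next
  case (step m)
  then show ?case by (simp add: sum.cl_ivl_Suc)
qed

lemma piece_sum:
  assumes "cp m0" "cp m" "m0 < m" "\<forall>t\<in>{Suc m0..m}. u t = v" "- B < v" "v < B"
  shows "(\<Sum>t=Suc m0..m. y t - u t) = lam * (s m0 - s m)"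
proof -
  have "(\<Sum>t=Suc m0..m. u t - y t) = (\<Sum>t=Suc m0..m. lam * (s t - s (t - 1)))"
  proof (rule sum.cong)
    fix t assume t: "t \<in> {Suc m0..m}"
    then have t1: "t \<in> {1..n}" using assms unfolding cp_def by auto
    have "u t + B \<noteq> 0" "u t - B \<noteq> 0" using assms t by auto
    then have "gm t = 0" "gp t = 0" using slack t1 by auto
    then show "u t - y t = lam * (s t - s (t - 1))" using eqn t1 by auto
  qed simp
  also have "\<dots> = lam * (s m - s m0)"
    using assms tele[of m0 m] by (simp only: sum_distrib_left[symmetric])
  finally have e: "(\<Sum>t=Suc m0..m. u t - y t) = lam * (s m - s m0)" .
  have "(\<Sum>t=Suc m0..m. y t - u t) = - (\<Sum>t=Suc m0..m. u t - y t)"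
    by (simp only: sum_negf[symmetric] minus_diff_eq)
  then show ?thesis using e by (simp add: algebra_simps)
qed

lemma s_cp: "cp m \<Longrightarrow> s m = sgn (u (Suc m) - u m)"
  using sgnc unfolding cp_def by auto

definition Inv :: "nat \<Rightarrow> nat \<Rightarrow> nat \<Rightarrow> nat \<Rightarrow> bool" where
  "Inv m a p k \<longleftrightarrow> cp m \<and> 1 \<le> a \<and> a \<le> Suc m \<and> 1 \<le> p \<and> p < a \<and>
     real (Suc m - a) < l0 \<and> tv a m < V0 \<and>
     (\<Sum>t=a..m. y t - u t) = 0 \<and> (\<Sum>t=a..m. u t * (y t - u t)) = 0 \<and>
     (\<Sum>t=1..a-1. reg t) \<le> Phi a p k \<and> k \<le> 2 \<and>
     (k = 1 \<longrightarrow> u p > B - kap \<and> u (Suc m) < u m) \<and>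
     (k = 2 \<longrightarrow> u p < - B + kap \<and> u (Suc m) > u m)"

end


context offl
begin

lemma cnsts: "0 < Kg" "Kg = 4 * R + 4" "P0 = 2 * R + 2" "0 < Kg / l0" "0 < Kg / V0" "0 < P0 / B"
  "kap = Kg / (2 * lam)" "l0 * kap^2 \<le> Kg" "kap \<le> B / 2" "0 < P0"
  using Rnn l0pos V0pos Bpos lk kB unfolding Kg_def P0_def kap_def by auto

lemma Phi_diff:
  assumes "1 \<le> a" "a \<le> a'" "1 \<le> p" "p \<le> p'"
  shows "Phi a' p' k' = Phi a p k + (Kg / l0) * real (a' - a) + (Kg / V0) * tv a a' + (P0 / B) * tv p p'
     + ((if k' = 0 then 0 else P0) - (if k = 0 then 0 else P0))"
proof -
  have "tv 1 a' = tv 1 a + tv a a'" using assms by (intro tv_split) auto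
  moreover have "tv 1 p' = tv 1 p + tv p p'" using assms by (intro tv_split) auto
  moreover have "real (a' - 1) = real (a - 1) + real (a' - a)" using assms by simp
  ultimately show ?thesis unfolding Phi_def by (simp add: algebra_simps)
qed

lemma close_step:
  assumes I: "Inv m0 a p k" and cpm: "cp m" and lt: "m0 < m"
    and piece: "(\<Sum>t=Suc m0..m. reg t) \<le> R + Q"
    and credit: "Phi a p k + 2 * R + 1 + Q \<le> Phi (Suc m) p' k'"
    and pp: "1 \<le> p'" "p' \<le> m" "k' \<le> 2"
    and t1: "k' = 1 \<longrightarrow> u p' > B - kap \<and> u (Suc m) < u m"
    and t2: "k' = 2 \<longrightarrow> u p' < - B + kap \<and> u (Suc m) > u m"
  shows "Inv m (Suc m) p' k'"
proof -
  have a1: "1 \<le> a" "a \<le> Suc m0" and l: "real (Suc m0 - a) < l0" "tv a m0 < V0"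
    and z: "(\<Sum>t=a..m0. y t - u t) = 0" "(\<Sum>t=a..m0. u t * (y t - u t)) = 0"
    and r: "(\<Sum>t=1..a-1. reg t) \<le> Phi a p k" and cp0: "cp m0"
    using I unfolding Inv_def by auto
  have mn: "m \<le> n" "m0 \<le> n" using cpm cp0 unfolding cp_def by auto
  have oc: "(\<Sum>t=a..m0. reg t) \<le> R + 1"
    by (rule open_cost) (use a1 mn l z in auto)
  have "(\<Sum>t=1..m. reg t) = (\<Sum>t=1..a-1. reg t) + (\<Sum>t=Suc (a-1)..m. reg t)"
    by (rule sum_split_ivl) (use a1 lt in auto)
  also have "Suc (a - 1) = a" using a1 by simp
  also have "(\<Sum>t=a..m. reg t) = (\<Sum>t=a..m0. reg t) + (\<Sum>t=Suc m0..m. reg t)"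
    by (rule sum_split_ivl) (use a1 lt in auto)
  finally have "(\<Sum>t=1..m. reg t) \<le> Phi a p k + (R + 1) + (R + Q)"
    using r oc piece by linarith
  then have reg: "(\<Sum>t=1..Suc m - 1. reg t) \<le> Phi (Suc m) p' k'" using credit by simp
  show ?thesis unfolding Inv_def
    using cpm pp t1 t2 reg l0pos V0pos tv_empty[of m "Suc m"] by auto
qed

lemma step:
  assumes I: "Inv m0 a p k" and cpm: "cp m" and lt: "m0 < m"
    and nb: "\<And>t. m0 < t \<Longrightarrow> t < m \<Longrightarrow> \<not> cp t"
  shows "\<exists>a' p' k'. Inv m a' p' k'"
proof -
  have a1: "1 \<le> a" "a \<le> Suc m0" "1 \<le> p" "p < a" and l: "real (Suc m0 - a) < l0" "tv a m0 < V0"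
    and z: "(\<Sum>t=a..m0. y t - u t) = 0" "(\<Sum>t=a..m0. u t * (y t - u t)) = 0"
    and r: "(\<Sum>t=1..a-1. reg t) \<le> Phi a p k" and cp0: "cp m0" and k2: "k \<le> 2"
    and tg1: "k = 1 \<longrightarrow> u p > B - kap \<and> u (Suc m0) < u m0"
    and tg2: "k = 2 \<longrightarrow> u p < - B + kap \<and> u (Suc m0) > u m0"
    using I unfolding Inv_def by auto
  have mn: "m < n" "1 \<le> m0" "m0 < n" using cpm cp0 unfolding cp_def by auto
  define v where "v = u m"
  have const: "\<forall>t\<in>{Suc m0..m}. u t = v"
  proof
    fix t assume t: "t \<in> {Suc m0..m}"
    show "u t = v" unfolding v_def
      by (rule const_between) (use t mn nb in auto)
  qed
  have uS: "u (Suc m0) = v" using const lt by auto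
  have bx: "- B \<le> u m0" "u m0 \<le> B" "- B \<le> v" "v \<le> B" "- B \<le> u (Suc m)" "u (Suc m) \<le> B"
    using ubox mn lt unfolding v_def by auto
  have d0: "v \<noteq> u m0" using cp0 uS unfolding cp_def by auto
  have d1: "u (Suc m) \<noteq> v" using cpm unfolding cp_def v_def by auto
  have s0: "s m0 = sgn (v - u m0)" using s_cp[OF cp0] uS by simp
  have s1: "s m = sgn (u (Suc m) - v)" using s_cp[OF cpm] unfolding v_def by simp
  have pc0: "(\<Sum>t=Suc m0..m. reg t) \<le> R"
    by (rule const_cost[of _ _ v]) (use const bx mn lt in auto)
  have Pd: "\<And>a' p' k'. a \<le> a' \<Longrightarrow> p \<le> p' \<Longrightarrow> Phi a' p' k' = Phi a p k + (Kg / l0) * real (a' - a)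
      + (Kg / V0) * tv a a' + (P0 / B) * tv p p' + ((if k' = 0 then 0 else P0) - (if k = 0 then 0 else P0))"
    by (rule Phi_diff) (use a1 in auto)
  have tvnn: "\<And>i j. 0 \<le> tv i j" by (rule tv_nonneg)
  have C: "0 < Kg / l0" "0 < Kg / V0" "0 < P0 / B" "Kg = 4 * R + 4" "P0 = 2 * R + 2"
    "l0 * kap^2 \<le> Kg" "kap \<le> B / 2" "kap = Kg / (2 * lam)" using cnsts by auto
  have KgR: "Kg = 4 * R + 4" and P0R: "P0 = 2 * R + 2" using cnsts by auto
  have nn1: "\<And>x::nat. 0 \<le> (Kg / l0) * real x" using C(1) by (intro mult_nonneg_nonneg) auto
  have nn2: "\<And>i j. 0 \<le> (Kg / V0) * tv i j" using C(2) tvnn by (intro mult_nonneg_nonneg) auto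
  have nn3: "\<And>i j. 0 \<le> (P0 / B) * tv i j" using C(3) tvnn by (intro mult_nonneg_nonneg) auto
  have psi: "0 \<le> (if k = 0 then 0 else P0)" "(if k = 0 then 0 else P0) \<le> P0" using cnsts by auto
  have len: "real (m - m0) \<le> real (Suc m - a)" using a1 lt by simp
  have L_lt: "real (m - m0) < l0 \<Longrightarrow> real (m - m0) * kap^2 \<le> Kg"
  proof -
    assume "real (m - m0) < l0"
    then have "real (m - m0) * kap^2 \<le> l0 * kap^2" by (intro mult_right_mono) auto
    then show ?thesis using C by simp
  qed
  have credlong: "real (m - m0) \<ge> l0 \<Longrightarrow> Kg \<le> (Kg / l0) * real (Suc m - a)"
  proof -
    assume "real (m - m0) \<ge> l0"
    then have "l0 \<le> real (Suc m - a)" using len by simp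
    then have "(Kg / l0) * l0 \<le> (Kg / l0) * real (Suc m - a)" using C by (intro mult_left_mono) auto
    then show ?thesis using l0pos by simp
  qed
  consider (pass) "(u m0 < v \<and> v < u (Suc m)) \<or> (v < u m0 \<and> u (Suc m) < v)"
    | (mx) "u m0 < v \<and> u (Suc m) < v" | (mn) "v < u m0 \<and> v < u (Suc m)"
    using d0 d1 by linarith
  then show ?thesis
  proof cases
    case pass
    have int: "- B < v" "v < B" using pass bx by auto
    have seq: "s m0 = s m" using pass s0 s1 by (auto simp: sgn_if)
    have ps1: "(\<Sum>t=Suc m0..m. y t - u t) = 0"
      using piece_sum[OF cp0 cpm lt const int] seq by simp
    have ps2: "(\<Sum>t=Suc m0..m. u t * (y t - u t)) = 0"
    proof -
      have "(\<Sum>t=Suc m0..m. u t * (y t - u t)) = (\<Sum>t=Suc m0..m. v * (y t - u t))"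
        by (rule sum.cong) (use const in auto)
      also have "\<dots> = v * (\<Sum>t=Suc m0..m. y t - u t)" by (simp add: sum_distrib_left)
      finally show ?thesis using ps1 by simp
    qed
    have tgs: "(u (Suc m0) < u m0) = (u (Suc m) < u m)" using pass uS unfolding v_def by auto
    show ?thesis
    proof (cases "real (Suc m - a) < l0 \<and> tv a m < V0")
      case True
      have "Inv m a p k" unfolding Inv_def
      proof (intro conjI)
        show "(\<Sum>t=a..m. y t - u t) = 0"
          using sum_split_ivl[of a m0 m "\<lambda>t. y t - u t"] a1 lt z ps1 by simp
        show "(\<Sum>t=a..m. u t * (y t - u t)) = 0"
          using sum_split_ivl[of a m0 m "\<lambda>t. u t * (y t - u t)"] a1 lt z ps2 by simp
      qed (use cpm a1 lt True r k2 tg1 tg2 tgs uS d1[unfolded v_def] in auto)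
      then show ?thesis by blast
    next
      case False
      have "Inv m (Suc m) p k"
      proof (rule close_step[OF I cpm lt, of 0])
        show "(\<Sum>t=Suc m0..m. reg t) \<le> R + 0" using pc0 by simp
        have "Kg \<le> (Kg / l0) * real (Suc m - a) + (Kg / V0) * tv a (Suc m)"
        proof (cases "real (Suc m - a) < l0")
          case True
          then have "V0 \<le> tv a m" using False by auto
          also have "\<dots> \<le> tv a (Suc m)" using a1 lt by (intro tv_mono) auto
          finally have "(Kg / V0) * V0 \<le> (Kg / V0) * tv a (Suc m)" using C by (intro mult_left_mono) auto
          moreover have "(Kg / V0) * V0 = Kg" using V0pos by simp
          moreover have "0 \<le> (Kg / l0) * real (Suc m - a)" using C(1) by (intro mult_nonneg_nonneg) auto
          ultimately show ?thesis by linarith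
        next
          case False
          then have "(Kg / l0) * l0 \<le> (Kg / l0) * real (Suc m - a)" using C by (intro mult_left_mono) auto
          moreover have "(Kg / l0) * l0 = Kg" using l0pos by simp
          moreover have "0 \<le> (Kg / V0) * tv a (Suc m)" using C(2) tvnn[of a "Suc m"] by (intro mult_nonneg_nonneg) auto
          ultimately show ?thesis by linarith
        qed
        moreover have "Phi (Suc m) p k = Phi a p k + (Kg / l0) * real (Suc m - a)
          + (Kg / V0) * tv a (Suc m) + (P0 / B) * tv p p"
          using Pd[of "Suc m" p k] a1 lt by simp
        moreover have "(P0 / B) * tv p p = 0" by (simp add: tv_empty)
        ultimately show "Phi a p k + 2 * R + 1 + 0 \<le> Phi (Suc m) p k"
          using KgR Rnn by linarith
        show "1 \<le> p" "p \<le> m" "k \<le> 2" using a1 lt k2 by auto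
        show "k = 1 \<longrightarrow> B - kap < u p \<and> u (Suc m) < u m" using tg1 tgs by auto
        show "k = 2 \<longrightarrow> u p < - B + kap \<and> u m < u (Suc m)" using tg2 tgs uS pass unfolding v_def by auto
      qed
      then show ?thesis by blast
    qed
  next
    case mx
    have sm0: "s m0 = 1" "s m = -1" using mx s0 s1 by auto
    have k1: "k \<noteq> 1" using tg1 mx uS by auto
    have dn: "u (Suc m) < u m" using mx unfolding v_def by simp
    consider (long) "real (m - m0) \<ge> l0" | (box) "real (m - m0) < l0" "v > B - kap"
      | (good) "real (m - m0) < l0" "v \<le> B - kap" by linarith
    then show ?thesis
    proof cases
      case long
      have "Inv m (Suc m) m 0"
      proof (rule close_step[OF I cpm lt, of 0])
        show "(\<Sum>t=Suc m0..m. reg t) \<le> R + 0" using pc0 by simp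
        have "Phi (Suc m) m 0 = Phi a p k + (Kg / l0) * real (Suc m - a)
          + (Kg / V0) * tv a (Suc m) + (P0 / B) * tv p m - (if k = 0 then 0 else P0)"
          using Pd[of "Suc m" m 0] a1 lt by simp
        then show "Phi a p k + 2 * R + 1 + 0 \<le> Phi (Suc m) m 0"
          using credlong[OF long] nn2[of a "Suc m"] nn3[of p m] psi KgR P0R Rnn by linarith
      qed (use mn lt in auto)
      then show ?thesis by blast
    next
      case box
      have "Inv m (Suc m) m 1"
      proof (rule close_step[OF I cpm lt, of 0])
        show "(\<Sum>t=Suc m0..m. reg t) \<le> R + 0" using pc0 by simp
        have pd: "Phi (Suc m) m 1 = Phi a p k + (Kg / l0) * real (Suc m - a)
          + (Kg / V0) * tv a (Suc m) + (P0 / B) * tv p m + (P0 - (if k = 0 then 0 else P0))"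
          using Pd[of "Suc m" m 1] a1 lt by simp
        have ex: "k = 2 \<Longrightarrow> P0 \<le> (P0 / B) * tv p m"
        proof -
          assume "k = 2"
          then have "u p < - B + kap" using tg2 by simp
          moreover have "\<bar>u m - u p\<bar> \<le> tv p m" using a1 lt by (intro tv_ge) auto
          ultimately have "B \<le> tv p m" using box C unfolding v_def by linarith
          then have "(P0 / B) * B \<le> (P0 / B) * tv p m" using C by (intro mult_left_mono) auto
          then show ?thesis using Bpos by simp
        qed
        show "Phi a p k + 2 * R + 1 + 0 \<le> Phi (Suc m) m 1"
        proof (cases "k = 0")
          case True
          then have "(if k = 0 then 0 else P0) = 0" by simp
          then show ?thesis unfolding pd using nn1[of "Suc m - a"] nn2[of a "Suc m"] nn3[of p m] P0R Rnn
            by linarith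
        next
          case False
          then have "k = 2" using k1 k2 by simp
          then have "P0 \<le> (P0 / B) * tv p m" "(if k = 0 then 0 else P0) = P0" using ex by auto
          then show ?thesis unfolding pd using nn1[of "Suc m - a"] nn2[of a "Suc m"] P0R Rnn
            by linarith
        qed
        show "1 = 1 \<longrightarrow> B - kap < u m \<and> u (Suc m) < u m" using box dn unfolding v_def by simp
      qed (use mn lt in auto)
      then show ?thesis by blast
    next
      case good
      define w where "w = v + kap"
      have wb: "- B \<le> w" "w \<le> B" using good bx kap_pos unfolding w_def by linarith+
      have int: "- B < v" "v < B" using mx bx good kap_pos by linarith+
      have ps: "(\<Sum>t=Suc m0..m. y t - u t) = 2 * lam"
        using piece_sum[OF cp0 cpm lt const int] sm0 by simp
      have "(\<Sum>t=Suc m0..m. reg t) \<le> R + (\<Sum>t=Suc m0..m. (y t - w)^2 - (y t - u t)^2)"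
        by (rule bin_cost) (use mn lt wb in auto)
      also have "(\<Sum>t=Suc m0..m. (y t - w)^2 - (y t - u t)^2) = (\<Sum>t=Suc m0..m. kap^2 - 2 * kap * (y t - u t))"
        by (rule sum.cong) (use const in \<open>auto simp: w_def power2_eq_square algebra_simps\<close>)
      also have "\<dots> = real (m - m0) * kap^2 - 2 * kap * (\<Sum>t=Suc m0..m. y t - u t)"
        by (simp only: sum_subtractf sum_distrib_left[symmetric]) simp
      also have "\<dots> = real (m - m0) * kap^2 - 2 * Kg"
        unfolding ps using C lampos by simp
      finally have pc: "(\<Sum>t=Suc m0..m. reg t) \<le> R + (- Kg)" using L_lt[OF good(1)] by simp
      have "Inv m (Suc m) m 0"
      proof (rule close_step[OF I cpm lt pc])
        have "Phi (Suc m) m 0 = Phi a p k + (Kg / l0) * real (Suc m - a)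
          + (Kg / V0) * tv a (Suc m) + (P0 / B) * tv p m - (if k = 0 then 0 else P0)"
          using Pd[of "Suc m" m 0] a1 lt by simp
        then show "Phi a p k + 2 * R + 1 + - Kg \<le> Phi (Suc m) m 0"
          using nn1[of "Suc m - a"] nn2[of a "Suc m"] nn3[of p m] psi KgR P0R Rnn by linarith
      qed (use mn lt in auto)
      then show ?thesis by blast
    qed
  next
    case mn
    have sm0: "s m0 = -1" "s m = 1" using mn s0 s1 by auto
    have k1: "k \<noteq> 2" using tg2 mn uS by auto
    have up: "u (Suc m) > u m" using mn unfolding v_def by simp
    have mn1: "m < n" "1 \<le> m0" using cpm cp0 unfolding cp_def by auto
    consider (long) "real (m - m0) \<ge> l0" | (box) "real (m - m0) < l0" "v < - B + kap"
      | (good) "real (m - m0) < l0" "v \<ge> - B + kap" by linarith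
    then show ?thesis
    proof cases
      case long
      have "Inv m (Suc m) m 0"
      proof (rule close_step[OF I cpm lt, of 0])
        show "(\<Sum>t=Suc m0..m. reg t) \<le> R + 0" using pc0 by simp
        have "Phi (Suc m) m 0 = Phi a p k + (Kg / l0) * real (Suc m - a)
          + (Kg / V0) * tv a (Suc m) + (P0 / B) * tv p m - (if k = 0 then 0 else P0)"
          using Pd[of "Suc m" m 0] a1 lt by simp
        then show "Phi a p k + 2 * R + 1 + 0 \<le> Phi (Suc m) m 0"
          using credlong[OF long] nn2[of a "Suc m"] nn3[of p m] psi KgR P0R Rnn by linarith
      qed (use mn1 lt in auto)
      then show ?thesis by blast
    next
      case box
      have "Inv m (Suc m) m 2"
      proof (rule close_step[OF I cpm lt, of 0])
        show "(\<Sum>t=Suc m0..m. reg t) \<le> R + 0" using pc0 by simp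
        have pd: "Phi (Suc m) m 2 = Phi a p k + (Kg / l0) * real (Suc m - a)
          + (Kg / V0) * tv a (Suc m) + (P0 / B) * tv p m + (P0 - (if k = 0 then 0 else P0))"
          using Pd[of "Suc m" m 2] a1 lt by simp
        have ex: "k = 1 \<Longrightarrow> P0 \<le> (P0 / B) * tv p m"
        proof -
          assume "k = 1"
          then have "u p > B - kap" using tg1 by simp
          moreover have "\<bar>u m - u p\<bar> \<le> tv p m" using a1 lt by (intro tv_ge) auto
          ultimately have "B \<le> tv p m" using box C unfolding v_def by linarith
          then have "(P0 / B) * B \<le> (P0 / B) * tv p m" using C by (intro mult_left_mono) auto
          then show ?thesis using Bpos by simp
        qed
        show "Phi a p k + 2 * R + 1 + 0 \<le> Phi (Suc m) m 2"
        proof (cases "k = 0")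
          case True
          then have "(if k = 0 then 0 else P0) = 0" by simp
          then show ?thesis unfolding pd using nn1[of "Suc m - a"] nn2[of a "Suc m"] nn3[of p m] P0R Rnn
            by linarith
        next
          case False
          then have "k = 1" using k1 k2 by simp
          then have "P0 \<le> (P0 / B) * tv p m" "(if k = 0 then 0 else P0) = P0" using ex by auto
          then show ?thesis unfolding pd using nn1[of "Suc m - a"] nn2[of a "Suc m"] P0R Rnn
            by linarith
        qed
        show "2 = 2 \<longrightarrow> u m < - B + kap \<and> u m < u (Suc m)" using box up unfolding v_def by simp
      qed (use mn1 lt in auto)
      then show ?thesis by blast
    next
      case good
      define w where "w = v - kap"
      have wb: "- B \<le> w" "w \<le> B" using good bx kap_pos unfolding w_def by linarith+
      have int: "- B < v" "v < B" using mn bx good kap_pos by linarith+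
      have ps: "(\<Sum>t=Suc m0..m. y t - u t) = - 2 * lam"
        using piece_sum[OF cp0 cpm lt const int] sm0 by simp
      have "(\<Sum>t=Suc m0..m. reg t) \<le> R + (\<Sum>t=Suc m0..m. (y t - w)^2 - (y t - u t)^2)"
        by (rule bin_cost) (use mn1 lt wb in auto)
      also have "(\<Sum>t=Suc m0..m. (y t - w)^2 - (y t - u t)^2) = (\<Sum>t=Suc m0..m. kap^2 + 2 * kap * (y t - u t))"
        by (rule sum.cong) (use const in \<open>auto simp: w_def power2_eq_square algebra_simps\<close>)
      also have "\<dots> = real (m - m0) * kap^2 + 2 * kap * (\<Sum>t=Suc m0..m. y t - u t)"
        by (simp only: sum.distrib sum_distrib_left[symmetric]) simp
      also have "\<dots> = real (m - m0) * kap^2 - 2 * Kg"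
        unfolding ps using C lampos by simp
      finally have pc: "(\<Sum>t=Suc m0..m. reg t) \<le> R + (- Kg)" using L_lt[OF good(1)] by simp
      have "Inv m (Suc m) m 0"
      proof (rule close_step[OF I cpm lt pc])
        have "Phi (Suc m) m 0 = Phi a p k + (Kg / l0) * real (Suc m - a)
          + (Kg / V0) * tv a (Suc m) + (P0 / B) * tv p m - (if k = 0 then 0 else P0)"
          using Pd[of "Suc m" m 0] a1 lt by simp
        then show "Phi a p k + 2 * R + 1 + - Kg \<le> Phi (Suc m) m 0"
          using nn1[of "Suc m - a"] nn2[of a "Suc m"] nn3[of p m] psi KgR P0R Rnn by linarith
      qed (use mn1 lt in auto)
      then show ?thesis by blast
    qed
  qed
qed

end


context offl
begin

lemma first_inv:
  assumes cpm: "cp m" and nb: "\<And>t. t < m \<Longrightarrow> \<not> cp t"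
  shows "Inv m (Suc m) m 0"
proof -
  have m: "1 \<le> m" "m < n" using cpm unfolding cp_def by auto
  define v where "v = u m"
  have const: "\<forall>t\<in>{1..m}. u t = v"
  proof
    fix t assume t: "t \<in> {1..m}"
    show "u t = v" unfolding v_def by (rule const_between) (use t m nb in auto)
  qed
  have bx: "- B \<le> v" "v \<le> B" using ubox m unfolding v_def by auto
  have r: "(\<Sum>t=1..m. reg t) \<le> R"
    by (rule const_cost[of _ _ v]) (use const bx m in auto)
  have nn: "0 \<le> (Kg / l0) * real (Suc m - 1)" "0 \<le> (Kg / V0) * tv 1 (Suc m)" "0 \<le> (P0 / B) * tv 1 m"
  proof -
    have "0 \<le> Kg / l0" "0 \<le> Kg / V0" "0 \<le> P0 / B" using cnsts(4,5,6) by auto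
    then show "0 \<le> (Kg / l0) * real (Suc m - 1)" "0 \<le> (Kg / V0) * tv 1 (Suc m)" "0 \<le> (P0 / B) * tv 1 m"
      using mult_nonneg_nonneg[OF _ tv_nonneg] mult_nonneg_nonneg[OF _ of_nat_0_le_iff] by blast+
  qed
  have "R \<le> Phi (Suc m) m 0" unfolding Phi_def using nn by simp
  then show ?thesis unfolding Inv_def using cpm m r l0pos V0pos tv_empty[of m "Suc m"] by auto
qed

lemma all_inv: "cp m \<Longrightarrow> \<exists>a p k. Inv m a p k"
proof (induction m rule: less_induct)
  case (less m)
  show ?case
  proof (cases "\<exists>t<m. cp t")
    case False
    then have "Inv m (Suc m) m 0" using first_inv less.prems by blast
    then show ?thesis by blast
  next
    case True
    then obtain t0 where t0: "t0 < m" "cp t0" by blast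
    define m0 where "m0 = (GREATEST t. t < m \<and> cp t)"
    have bnd: "\<forall>y. y < m \<and> cp y \<longrightarrow> y \<le> m" by auto
    have m0p: "m0 < m \<and> cp m0" unfolding m0_def
      by (rule GreatestI_nat[of _ t0 m]) (use t0 bnd in auto)
    have nb: "\<And>t. m0 < t \<Longrightarrow> t < m \<Longrightarrow> \<not> cp t"
    proof
      fix t assume a: "m0 < t" "t < m" "cp t"
      then have "t \<le> m0" unfolding m0_def by (intro Greatest_le_nat[of _ t m]) (use bnd in auto)
      then show False using a by simp
    qed
    obtain a p k where "Inv m0 a p k" using less.IH m0p by blast
    then show ?thesis using step less.prems m0p nb by blast
  qed
qed

lemma offline_bound:
  "(\<Sum>t=1..n. reg t) \<le> (Kg / l0) * real n + (Kg / V0 + P0 / B) * tv 1 n + P0 + 3 * R + 1"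
proof -
  obtain t0 where t0: "cp t0" using cpex unfolding cp_def by blast
  define ms where "ms = (GREATEST t. cp t)"
  have bnd: "\<forall>y. cp y \<longrightarrow> y \<le> n" unfolding cp_def by auto
  have cms: "cp ms" unfolding ms_def by (rule GreatestI_nat[of _ t0 n]) (use t0 bnd in auto)
  have nb: "\<And>t. ms < t \<Longrightarrow> \<not> cp t"
  proof
    fix t assume a: "ms < t" "cp t"
    then have "t \<le> ms" unfolding ms_def by (intro Greatest_le_nat[of _ t n]) (use bnd in auto)
    then show False using a by simp
  qed
  obtain a p k where I: "Inv ms a p k" using all_inv cms by blast
  have a1: "1 \<le> a" "a \<le> Suc ms" "1 \<le> p" "p < a" and l: "real (Suc ms - a) < l0" "tv a ms < V0"
    and z: "(\<Sum>t=a..ms. y t - u t) = 0" "(\<Sum>t=a..ms. u t * (y t - u t)) = 0"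
    and r: "(\<Sum>t=1..a-1. reg t) \<le> Phi a p k"
    using I unfolding Inv_def by auto
  have msn: "1 \<le> ms" "ms < n" using cms unfolding cp_def by auto
  have oc: "(\<Sum>t=a..ms. reg t) \<le> R + 1"
    by (rule open_cost) (use a1 msn l z in auto)
  define v where "v = u n"
  have const: "\<forall>t\<in>{Suc ms..n}. u t = v"
  proof
    fix t assume t: "t \<in> {Suc ms..n}"
    show "u t = v" unfolding v_def by (rule const_between) (use t nb in auto)
  qed
  have bx: "- B \<le> v" "v \<le> B" using ubox msn unfolding v_def by auto
  have lc: "(\<Sum>t=Suc ms..n. reg t) \<le> R"
    by (rule const_cost[of _ _ v]) (use const bx msn in auto)
  have "(\<Sum>t=1..n. reg t) = (\<Sum>t=1..a-1. reg t) + (\<Sum>t=Suc (a-1)..n. reg t)"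
    by (rule sum_split_ivl) (use a1 msn in auto)
  also have "Suc (a - 1) = a" using a1 by simp
  also have "(\<Sum>t=a..n. reg t) = (\<Sum>t=a..ms. reg t) + (\<Sum>t=Suc ms..n. reg t)"
    by (rule sum_split_ivl) (use a1 msn in auto)
  finally have tot: "(\<Sum>t=1..n. reg t) \<le> Phi a p k + (R + 1) + R" using r oc lc by linarith
  have "real (a - 1) \<le> real n" using a1 msn by simp
  then have p1: "(Kg / l0) * real (a - 1) \<le> (Kg / l0) * real n" using cnsts(4,5,6) by (intro mult_left_mono) auto
  have "tv 1 a \<le> tv 1 n" using a1 msn by (intro tv_mono) auto
  then have p2: "(Kg / V0) * tv 1 a \<le> (Kg / V0) * tv 1 n" using cnsts(4,5,6) by (intro mult_left_mono) auto
  have "tv 1 p \<le> tv 1 n" using a1 msn by (intro tv_mono) auto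
  then have p3: "(P0 / B) * tv 1 p \<le> (P0 / B) * tv 1 n" using cnsts(4,5,6) by (intro mult_left_mono) auto
  have p4: "(if k = 0 then 0 else P0) \<le> P0" using cnsts(10) by auto
  have "Phi a p k \<le> (Kg / l0) * real n + (Kg / V0) * tv 1 n + (P0 / B) * tv 1 n + P0 + R"
    unfolding Phi_def using p1 p2 p3 p4 by linarith
  then show ?thesis using tot by (simp add: algebra_simps)
qed

lemma offline_plain:
  "(\<Sum>t=1..n. (y t - X t)^2 - (y t - u t)^2) \<le> ((4 * R + 4) / l0) * real n
     + ((4 * R + 4) / V0 + (2 * R + 2) / B) * (\<Sum>t=2..n. \<bar>u t - u (t - 1)\<bar>) + (2 * R + 2) + 3 * R + 1"
proof -
  have "{1<..n} = {2..n}" by auto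
  then have "tv 1 n = (\<Sum>t=2..n. \<bar>u t - u (t - 1)\<bar>)" unfolding tv_def by simp
  then show ?thesis using offline_bound unfolding reg_def Kg_def P0_def by simp
qed

end


lemma cube_root_facts:
  fixes x :: real assumes "0 < x"
  shows "(x powr (1/3))^3 = x" "(x powr (1/3))^2 = x powr (2/3)" "0 < x powr (1/3)"
proof -
  have "(x powr (1/3))^3 = (x powr (1/3)) powr (real 3)"
    using assms by (simp add: powr_realpow)
  also have "\<dots> = x" using assms by (simp add: powr_powr)
  finally show "(x powr (1/3))^3 = x" .
  have "(x powr (1/3))^2 = (x powr (1/3)) powr (real 2)"
    using assms by (simp add: powr_realpow)
  also have "\<dots> = x powr (2/3)" using assms by (simp add: powr_powr)
  finally show "(x powr (1/3))^2 = x powr (2/3)" .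
  show "0 < x powr (1/3)" using assms by simp
qed

lemma caseA_arith:
  fixes a b phi B Kg lam :: real
  assumes "0 < a" "0 < b" "0 < phi" "1 \<le> B" "0 < Kg" "phi * a / b \<le> lam" "B * lam < Kg"
  shows "a^3 \<le> (Kg / phi)^2 * (a * b^2)"
proof -
  have "lam < Kg" using assms
    by (smt (verit, best) mult_le_cancel_right1 mult_nonneg_nonneg zero_le_divide_iff)
  then have "phi * (a / b) < Kg" using assms by simp
  then have q: "a / b < Kg / phi" using assms by (simp add: field_simps)
  have "(a / b)^2 \<le> (Kg / phi)^2" using q assms by (intro power_mono) auto
  then have "(a / b)^2 * (a * b^2) \<le> (Kg / phi)^2 * (a * b^2)" using assms by (intro mult_right_mono) auto
  moreover have "(a / b)^2 * (a * b^2) = a^3" using assms by (simp add: field_simps power2_eq_square power3_eq_cube)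
  ultimately show ?thesis by simp
qed

lemma caseB_l0:
  fixes a b phi Kg :: real
  assumes "0 < a" "0 < b" "0 < phi" "0 < Kg"
  shows "(Kg / (4 * phi^2 * a^2 / (Kg * b^2))) * a^3 = Kg^2 * (a * b^2) / (4 * phi^2)"
  using assms by (simp add: field_simps power2_eq_square power3_eq_cube)

lemma caseB_V0:
  fixes a b phi Kg :: real
  assumes "0 < a" "0 < b" "0 < phi" "0 < Kg"
  shows "(Kg / (b / (2 * phi * a))) * b^3 = 2 * phi * Kg * (a * b^2)"
  using assms by (simp add: field_simps power2_eq_square power3_eq_cube)

lemma b_le:
  fixes a b B :: real
  assumes "0 < a" "0 < b" "1 \<le> B" "b^3 \<le> 2 * B * a^3"
  shows "b^3 \<le> 2 * B * (a * b^2)"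
proof -
  have o: "1 \<le> (2 * B)^2" using assms(3) by (intro one_le_power) simp
  have "2 * B * 1 \<le> 2 * B * (2 * B)^2" using o assms(3) by (intro mult_left_mono) auto
  then have "2 * B \<le> (2 * B)^3" by (simp add: power3_eq_cube power2_eq_square mult.assoc)
  then have "2 * B * a^3 \<le> (2 * B)^3 * a^3" using assms by (intro mult_right_mono) auto
  moreover have "(2 * B * a)^3 = (2 * B)^3 * a^3" by (simp only: power_mult_distrib)
  ultimately have "b^3 \<le> (2 * B * a)^3" using assms(4) by linarith
  then have "b \<le> 2 * B * a"
  proof -
    assume h: "b^3 \<le> (2 * B * a)^3"
    show ?thesis
    proof (rule ccontr)
      assume "\<not> b \<le> 2 * B * a"
      then have "2 * B * a < b" by simp
      moreover have "0 \<le> 2 * B * a" using assms by simp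
      ultimately have "(2 * B * a)^3 < b^3" by (intro power_strict_mono) auto
      then show False using h by simp
    qed
  qed
  then have "b * b^2 \<le> 2 * B * a * b^2" using assms by (intro mult_right_mono) auto
  then show ?thesis by (simp add: power3_eq_cube power2_eq_square algebra_simps)
qed

theorem lemma8:
  shows "\<exists>p::real. p \<ge> 0 \<and>
    (\<forall>B G phi :: real. B \<ge> 1 \<longrightarrow> G \<ge> B \<longrightarrow> phi > 0 \<longrightarrow>
      (\<exists>c::real. c > 0 \<and>
        (\<forall>(n::nat) (Cn::real) (y::nat \<Rightarrow> real) (u::nat \<Rightarrow> real) (lam::real)
            (gm::nat \<Rightarrow> real) (gp::nat \<Rightarrow> real) (x0::real).
          n \<ge> 3 \<longrightarrow> Cn > 0 \<longrightarrow> - B \<le> x0 \<longrightarrow> x0 \<le> B \<longrightarrow>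
          (\<forall>t \<in> {1..n}. \<bar>y t\<bar> \<le> G) \<longrightarrow>
          offline_opt B Cn n y u \<longrightarrow>
          offline_kkt B Cn n y u lam gm gp \<longrightarrow>
          lam \<ge> phi * real n powr (1/3) / Cn powr (1/3) \<longrightarrow>
          (\<Sum>t = 1..n. (y t - flh_ogd_pred B G x0 y t)^2 - (y t - u t)^2)
            \<le> c * ln (real n) powr p * max (real n powr (1/3) * Cn powr (2/3)) 1)))"
proof (rule exI[of _ "2::real"], intro conjI allI impI)
  show "(0::real) \<le> 2" by simp
next
  fix B G phi :: real
  assume B1: "1 \<le> B" and GB: "B \<le> G" and ph: "0 < phi"
  define c0 where "c0 = 6 * (G + B)^2"
  define c1 where "c1 = 4 * c0 + 4"
  define c where "c = (G + B)^2 * c1^2 / phi^2 + c1^2 / (4 * phi^2) + 2 * phi * c1 + 4 * c1"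
  have c0p: "0 \<le> c0" unfolding c0_def by simp
  have c1p: "0 < c1" unfolding c1_def using c0p by simp
  have cp: "0 < c" unfolding c_def using c1p ph by (intro add_pos_pos add_nonneg_pos) auto
  show "\<exists>c. c > 0 \<and> (\<forall>(n::nat) (Cn::real) (y::nat \<Rightarrow> real) (u::nat \<Rightarrow> real) (lam::real)
            (gm::nat \<Rightarrow> real) (gp::nat \<Rightarrow> real) (x0::real).
          n \<ge> 3 \<longrightarrow> Cn > 0 \<longrightarrow> - B \<le> x0 \<longrightarrow> x0 \<le> B \<longrightarrow>
          (\<forall>t \<in> {1..n}. \<bar>y t\<bar> \<le> G) \<longrightarrow>
          offline_opt B Cn n y u \<longrightarrow>
          offline_kkt B Cn n y u lam gm gp \<longrightarrow>
          lam \<ge> phi * real n powr (1/3) / Cn powr (1/3) \<longrightarrow>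
          (\<Sum>t = 1..n. (y t - flh_ogd_pred B G x0 y t)^2 - (y t - u t)^2)
            \<le> c * ln (real n) powr 2 * max (real n powr (1/3) * Cn powr (2/3)) 1)"
  proof (intro exI[of _ c] conjI allI impI)
    show "0 < c" by (rule cp)
    fix n :: nat and Cn :: real and y u :: "nat \<Rightarrow> real" and lam :: real and gm gp :: "nat \<Rightarrow> real" and x0 :: real
    assume n3: "3 \<le> n" and Cp: "0 < Cn" and x01: "- B \<le> x0" and x02: "x0 \<le> B"
      and yb: "\<forall>t\<in>{1..n}. \<bar>y t\<bar> \<le> G" and opt: "offline_opt B Cn n y u"
      and kkt: "offline_kkt B Cn n y u lam gm gp"
      and lamb: "phi * real n powr (1/3) / Cn powr (1/3) \<le> lam"
    define X where "X = flh_ogd_pred B G x0 y"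
    define S where "S = (\<Sum>t = 1..n. (y t - X t)^2 - (y t - u t)^2)"
    define Lg where "Lg = ln (real n)"
    have Lg1: "1 \<le> Lg" unfolding Lg_def by (rule ln_n_ge1[OF n3])
    have Lg2: "Lg \<le> Lg^2" using Lg1 by (simp add: power2_eq_square)
    have Lgp: "ln (real n) powr 2 = Lg^2" unfolding Lg_def using Lg1 Lg_def by simp
    define a where "a = real n powr (1/3)"
    define b where "b = Cn powr (1/3)"
    have np: "0 < real n" using n3 by simp
    have af: "a^3 = real n" "0 < a" unfolding a_def using cube_root_facts[OF np] by auto
    have bf: "b^3 = Cn" "b^2 = Cn powr (2/3)" "0 < b" unfolding b_def using cube_root_facts[OF Cp] by auto
    define N where "N = a * b^2"
    have Np: "0 < N" unfolding N_def using af(2) bf(3) by simp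
    define M where "M = max N 1"
    have M: "N \<le> M" "1 \<le> M" unfolding M_def by auto
    have Meq: "max (real n powr (1/3) * Cn powr (2/3)) 1 = M" unfolding M_def N_def a_def bf(2)[symmetric] b_def by simp
    have lamb': "phi * a / b \<le> lam" using lamb unfolding a_def b_def by simp
    have lamp: "0 < lam" using lamb' ph af bf(1) bf(3) by (smt (verit) divide_pos_pos mult_pos_pos)
    define R where "R = 6 * (G + B)^2 * Lg"
    define Kg where "Kg = 4 * R + 4"
    have Rnn: "0 \<le> R" unfolding R_def using Lg1 by simp
    have Kgp: "0 < Kg" unfolding Kg_def using Rnn by simp
    have Kgc: "Kg \<le> c1 * Lg" unfolding Kg_def R_def c1_def c0_def using Lg1 by (simp add: algebra_simps)
    have Kgc2: "Kg \<le> c1 * Lg^2" using Kgc Lg2 c1p by (smt (verit) mult_left_mono)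
    have Kgsq: "Kg^2 \<le> c1^2 * Lg^2"
    proof -
      have "Kg^2 \<le> (c1 * Lg)^2" using Kgc Kgp by (intro power_mono) auto
      then show ?thesis by (simp add: power_mult_distrib)
    qed
    have goal_eq: "c * ln (real n) powr 2 * max (real n powr (1/3) * Cn powr (2/3)) 1 = c * Lg^2 * M"
      unfolding Lgp Meq by simp
    obtain s where s0: "\<forall>t \<in> {0..n}. \<bar>s t\<bar> \<le> 1" and sgnc: "\<forall>t\<in>{1..<n}. u (t + 1) \<noteq> u t \<longrightarrow> s t = sgn (u (t + 1) - u t)"
      and eqn: "\<forall>t\<in>{1..n}. u t - y t = lam * (s t - s (t - 1)) + gm t - gp t"
      using kkt unfolding offline_kkt_def by blast
    have tvz: "lam * ((\<Sum>t = 2..n. \<bar>u t - u (t - 1)\<bar>) - Cn) = 0"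
      and slack: "\<forall>t\<in>{1..n}. gm t * (u t + B) = 0 \<and> gp t * (u t - B) = 0"
      using kkt unfolding offline_kkt_def by auto
    have TV: "(\<Sum>t = 2..n. \<bar>u t - u (t - 1)\<bar>) = Cn" using tvz lamp by simp
    have ubox: "\<forall>t\<in>{1..n}. - B \<le> u t \<and> u t \<le> B"
      using opt unfolding offline_opt_def tv_feasible_def by auto
    have Cnb: "Cn \<le> 2 * B * real n"
    proof -
      have "(\<Sum>t = 2..n. \<bar>u t - u (t - 1)\<bar>) \<le> (\<Sum>t = 2..n. 2 * B)"
      proof (rule sum_mono)
        fix t assume t: "t \<in> {2..n}"
        then have "t \<in> {1..n}" "t - 1 \<in> {1..n}" by auto
        then have "- B \<le> u t \<and> u t \<le> B" "- B \<le> u (t - 1) \<and> u (t - 1) \<le> B" using ubox by blast+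
        then show "\<bar>u t - u (t - 1)\<bar> \<le> 2 * B" by (simp add: abs_le_iff)
      qed
      also have "\<dots> \<le> 2 * B * real n" using B1 by simp
      finally show ?thesis using TV by simp
    qed
    have S_def': "(\<Sum>t = 1..n. (y t - flh_ogd_pred B G x0 y t)^2 - (y t - u t)^2) = S"
      unfolding S_def X_def by simp
    have main: "S \<le> c * Lg^2 * M"
    proof (cases "B * lam < Kg")
      case True
      have "S \<le> real n * (G + B)^2" unfolding S_def X_def by (rule trivial_regret) (use yb B1 x01 x02 in auto)
      also have "real n \<le> (Kg / phi)^2 * N" unfolding N_def af(1)[symmetric]
        by (rule caseA_arith) (use af bf(1) bf(3) ph B1 Kgp lamb' True in auto)
      then have "real n * (G + B)^2 \<le> (Kg / phi)^2 * N * (G + B)^2" by (intro mult_right_mono) auto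
      also have "(Kg / phi)^2 \<le> c1^2 * Lg^2 / phi^2" using Kgsq ph by (simp add: power_divide divide_right_mono)
      then have "(Kg / phi)^2 * N * (G + B)^2 \<le> (c1^2 * Lg^2 / phi^2) * M * (G + B)^2"
        using M Np by (intro mult_right_mono mult_mono) auto
      also have "\<dots> = ((G + B)^2 * c1^2 / phi^2) * Lg^2 * M" by (simp add: field_simps)
      also have "\<dots> \<le> c * Lg^2 * M"
      proof -
        have "(G + B)^2 * c1^2 / phi^2 \<le> c" unfolding c_def using c1p ph by simp
        then show ?thesis using M Lg1 by (intro mult_right_mono) auto
      qed
      finally show ?thesis .
    next
      case False
      define l0 where "l0 = 4 * phi^2 * a^2 / (Kg * b^2)"
      define V0 where "V0 = b / (2 * phi * a)"
      have l0p: "0 < l0" unfolding l0_def using ph af bf(1) bf(3) Kgp by simp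
      have V0p: "0 < V0" unfolding V0_def using ph af bf(1) bf(3) by simp
      have loc: "offl n B lam R l0 V0 y u X s gm gp"
      proof (rule offl.intro)
        show "0 < B" using B1 by simp
        show "\<forall>t\<in>{1..n}. - B \<le> u t \<and> u t \<le> B" by (rule ubox)
        show "\<forall>t\<in>{1..<n}. u (t + 1) \<noteq> u t \<longrightarrow> s t = sgn (u (t + 1) - u t)" by (rule sgnc)
        show "\<forall>t\<in>{1..n}. u t - y t = lam * (s t - s (t - 1)) + gm t - gp t" by (rule eqn)
        show "\<forall>t\<in>{1..n}. gm t * (u t + B) = 0 \<and> gp t * (u t - B) = 0" by (rule slack)
        show "\<And>a b w. 1 \<le> a \<Longrightarrow> a \<le> b \<Longrightarrow> b \<le> n \<Longrightarrow> - B \<le> w \<Longrightarrow> w \<le> B \<Longrightarrow>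
          (\<Sum>t=a..b. (y t - X t)^2) \<le> (\<Sum>t=a..b. (y t - w)^2) + R"
          unfolding X_def R_def Lg_def by (rule interval_bound) (use n3 yb B1 GB x01 x02 in auto)
        show "0 \<le> R" by (rule Rnn)
        show "0 < lam" by (rule lamp)
        show "0 < l0" by (rule l0p)
        show "0 < V0" by (rule V0p)
        have "l0 * V0^2 = 1 / Kg" unfolding l0_def V0_def using ph af bf(1) bf(3) Kgp
          by (simp add: field_simps power2_eq_square)
        then show "l0 * V0^2 \<le> 1" using Kgp unfolding Kg_def using Rnn by simp
        have q: "(phi * a / b)^2 \<le> lam^2" using lamb' ph af bf(1) bf(3) by (intro power_mono) auto
        have "l0 * ((4 * R + 4) / (2 * lam))^2 = Kg * ((phi * a / b)^2 / lam^2)"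
          unfolding l0_def Kg_def[symmetric] using ph af bf(1) bf(3) Kgp lamp by (simp add: field_simps power2_eq_square)
        also have "\<dots> \<le> Kg * 1"
          using q lamp Kgp by (intro mult_left_mono) (auto simp: divide_le_eq_1)
        finally show "l0 * ((4 * R + 4) / (2 * lam))^2 \<le> 4 * R + 4" unfolding Kg_def by simp
        show "(4 * R + 4) / (2 * lam) \<le> B / 2"
          using False lamp unfolding Kg_def by (simp add: field_simps)
        show "\<exists>m. 1 \<le> m \<and> m < n \<and> u (Suc m) \<noteq> u m"
        proof (rule ccontr)
          assume h: "\<not> (\<exists>m. 1 \<le> m \<and> m < n \<and> u (Suc m) \<noteq> u m)"
          have "(\<Sum>t = 2..n. \<bar>u t - u (t - 1)\<bar>) = 0"
          proof (rule sum.neutral, rule ballI)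
            fix t assume t: "t \<in> {2..n}"
            then have "1 \<le> t - 1" "t - 1 < n" by auto
            then have "u (Suc (t - 1)) = u (t - 1)" using h by blast
            moreover have "Suc (t - 1) = t" using t by auto
            ultimately show "\<bar>u t - u (t - 1)\<bar> = 0" by simp
          qed
          then show False using TV Cp by simp
        qed
      qed
      have pl: "S \<le> ((4 * R + 4) / l0) * real n
         + ((4 * R + 4) / V0 + (2 * R + 2) / B) * (\<Sum>t=2..n. \<bar>u t - u (t - 1)\<bar>) + (2 * R + 2) + 3 * R + 1"
        unfolding S_def by (rule offl.offline_plain[OF loc])
      have e1: "((4 * R + 4) / l0) * real n = Kg^2 * N / (4 * phi^2)"
        unfolding Kg_def[symmetric] l0_def N_def af(1)[symmetric] using caseB_l0[OF af(2) bf(3) ph Kgp] by simp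
      have e2: "((4 * R + 4) / V0) * Cn = 2 * phi * Kg * N"
        unfolding Kg_def[symmetric] V0_def N_def bf(1)[symmetric] using caseB_V0[OF af(2) bf(3) ph Kgp] by simp
      have CnN: "Cn \<le> 2 * B * N"
        unfolding N_def bf(1)[symmetric] by (rule b_le) (use af bf(1) bf(3) B1 Cnb in auto)
      have e3: "((2 * R + 2) / B) * Cn \<le> 2 * Kg * N"
      proof -
        have "((2 * R + 2) / B) * Cn \<le> ((2 * R + 2) / B) * (2 * B * N)"
          using CnN Rnn B1 by (intro mult_left_mono) auto
        also have "\<dots> = (2 * R + 2) * 2 * N" using B1 by (simp add: field_simps)
        also have "\<dots> \<le> 2 * Kg * N" unfolding Kg_def using Np Rnn by (simp add: field_simps)
        finally show ?thesis .
      qed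
      have S1: "S \<le> Kg^2 * N / (4 * phi^2) + 2 * phi * Kg * N + 2 * Kg * N + 2 * Kg"
      proof -
        have pl': "S \<le> (Kg / l0) * real n + (Kg / V0 + (2 * R + 2) / B) * Cn + (2 * R + 2) + 3 * R + 1"
          using pl[folded Kg_def] TV by simp
        have "(Kg / V0 + (2 * R + 2) / B) * Cn = (Kg / V0) * Cn + ((2 * R + 2) / B) * Cn"
          by (simp only: distrib_right)
        moreover have "(Kg / l0) * real n = Kg^2 * N / (4 * phi^2)" using e1[folded Kg_def] .
        moreover have "(Kg / V0) * Cn = 2 * phi * Kg * N" using e2[folded Kg_def] .
        moreover have "2 * R + 2 + 3 * R + 1 \<le> 2 * Kg" unfolding Kg_def using Rnn by simp
        ultimately show ?thesis using pl' e3 by linarith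
      qed
      have t1: "Kg^2 * N / (4 * phi^2) \<le> (c1^2 / (4 * phi^2)) * Lg^2 * M"
      proof -
        have "Kg^2 * N \<le> (c1^2 * Lg^2) * M" using Kgsq M Np by (intro mult_mono) auto
        then show ?thesis using ph by (simp add: field_simps)
      qed
      have t2: "2 * phi * Kg * N \<le> (2 * phi * c1) * Lg^2 * M"
      proof -
        have "Kg * N \<le> (c1 * Lg^2) * M" using Kgc2 M Np Kgp by (intro mult_mono) auto
        then show ?thesis using ph by (simp add: algebra_simps mult_left_mono)
      qed
      have t3: "2 * Kg * N \<le> (2 * c1) * Lg^2 * M"
      proof -
        have "Kg * N \<le> (c1 * Lg^2) * M" using Kgc2 M Np Kgp by (intro mult_mono) auto
        then show ?thesis by (simp add: algebra_simps)
      qed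
      have t4: "2 * Kg \<le> (2 * c1) * Lg^2 * M"
      proof -
        have "Kg * 1 \<le> (c1 * Lg^2) * M" using Kgc2 M Kgp by (intro mult_mono) auto
        then show ?thesis by (simp add: algebra_simps)
      qed
      have t5: "0 \<le> ((G + B)^2 * c1^2 / phi^2) * Lg^2 * M" using M by simp
      have "S \<le> ((G + B)^2 * c1^2 / phi^2 + c1^2 / (4 * phi^2) + 2 * phi * c1 + 4 * c1) * Lg^2 * M"
        using S1 t1 t2 t3 t4 t5 by (simp add: algebra_simps)
      then show ?thesis unfolding c_def .
    qed
    show "(\<Sum>t = 1..n. (y t - flh_ogd_pred B G x0 y t)^2 - (y t - u t)^2)
            \<le> c * ln (real n) powr 2 * max (real n powr (1/3) * Cn powr (2/3)) 1"
      using main unfolding S_def' goal_eq .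
  qed
qed

end
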